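(* Let $\pi$ be a projective unitary representation of a countable group $G$ on a Hilbert space $H$ such that the commutant $\pi(G)'$ is a finite von Neumann algebra. Assume that $\bigcup_{i=1}^k\{\pi(g)\xi_i\}_{g\in G}$ is a frame for $H$. If $A\in\pi(G)'$ and $\eta_1,\dots,\eta_k\in H$ are Bessel vectors for $\pi$ with $\xi_i=A\eta_i$ for $i=1,\dots,k$, then $A$ is invertible and $\bigcup_{i=1}^k\{\pi(g)\eta_i\}_{g\in G}$ is also a frame for $H$.
   Context: A projective unitary representation of $G$ on $H$ is a map $g\mapsto\pi(g)$ into unitaries with $\pi(g)\pi(h)=\mu(g,h)\pi(gh)$, $\mu:G\times G\to\mathbb{T}$. $\eta$ is a Bessel vector for $\pi$ if $\{\pi(g)\eta\}_{g\in G}$ is a Bessel sequence. *)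

theory Defs
  imports "HOL-Analysis.Analysis" "HOL-Algebra.Group"
begin

text \<open>The distribution has no complex Hilbert spaces, so we introduce them as a type
class: a real normed vector space with a complex scalar multiplication (extending the
real one) and a complex inner product, linear in the first argument, conjugate symmetric,
inducing the norm.\<close>

class complex_inner = real_normed_vector +
  fixes scaleC :: "complex \<Rightarrow> 'a \<Rightarrow> 'a" (infixr \<open>*\<^sub>C\<close> 75)
  fixes cinner :: "'a \<Rightarrow> 'a \<Rightarrow> complex"
  assumes scaleC_add_right: "c *\<^sub>C (x + y) = c *\<^sub>C x + c *\<^sub>C y"
  and scaleC_add_left: "(c + d) *\<^sub>C x = c *\<^sub>C x + d *\<^sub>C x"
  and scaleC_scaleC: "c *\<^sub>C (d *\<^sub>C x) = (c * d) *\<^sub>C x"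
  and scaleC_one: "1 *\<^sub>C x = x"
  and scaleR_scaleC: "scaleR r x = complex_of_real r *\<^sub>C x"
  and cinner_add_left: "cinner (x + y) z = cinner x z + cinner y z"
  and cinner_scaleC_left: "cinner (c *\<^sub>C x) y = c * cinner x y"
  and cinner_commute: "cinner y x = cnj (cinner x y)"
  and cinner_self_norm: "cinner x x = complex_of_real ((norm x)\<^sup>2)"

class chilbert_space = complex_inner + complete_space

definition clinear :: "('a::complex_inner \<Rightarrow> 'b::complex_inner) \<Rightarrow> bool" where
  "clinear f \<longleftrightarrow> (\<forall>x y. f (x + y) = f x + f y) \<and> (\<forall>c x. f (c *\<^sub>C x) = c *\<^sub>C f x)"

definition bounded_clinear :: "('a::complex_inner \<Rightarrow> 'b::complex_inner) \<Rightarrow> bool" where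
  "bounded_clinear f \<longleftrightarrow> clinear f \<and> (\<exists>K. \<forall>x. norm (f x) \<le> norm x * K)"

text \<open>Hilbert space adjoint (exists and is unique for bounded operators by Riesz).\<close>
definition cadjoint :: "('a::complex_inner \<Rightarrow> 'a) \<Rightarrow> ('a \<Rightarrow> 'a)" where
  "cadjoint T = (SOME S. \<forall>x y. cinner (T x) y = cinner x (S y))"

definition unitary_op :: "('a::complex_inner \<Rightarrow> 'a) \<Rightarrow> bool" where
  "unitary_op U \<longleftrightarrow> bounded_clinear U \<and> cadjoint U \<circ> U = id \<and> U \<circ> cadjoint U = id"

definition invertible_op :: "('a::complex_inner \<Rightarrow> 'a) \<Rightarrow> bool" where
  "invertible_op A \<longleftrightarrow> (\<exists>B. bounded_clinear B \<and> A \<circ> B = id \<and> B \<circ> A = id)"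

definition commutant :: "('a::complex_inner \<Rightarrow> 'a) set \<Rightarrow> ('a \<Rightarrow> 'a) set" where
  "commutant S = {T. bounded_clinear T \<and> (\<forall>s\<in>S. T \<circ> s = s \<circ> T)}"

text \<open>Von Neumann algebra: a self-adjoint set of bounded operators equal to its
double commutant. Finite: every isometry in it is unitary (the identity is a finite
projection).\<close>
definition von_neumann_algebra :: "('a::complex_inner \<Rightarrow> 'a) set \<Rightarrow> bool" where
  "von_neumann_algebra M \<longleftrightarrow> M = commutant (commutant M) \<and> (\<forall>T\<in>M. cadjoint T \<in> M)"

definition finite_von_neumann_algebra :: "('a::complex_inner \<Rightarrow> 'a) set \<Rightarrow> bool" where
  "finite_von_neumann_algebra M \<longleftrightarrow> von_neumann_algebra M \<and>
     (\<forall>V\<in>M. cadjoint V \<circ> V = id \<longrightarrow> V \<circ> cadjoint V = id)"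

definition proj_unitary_rep ::
  "('g, 'b) monoid_scheme \<Rightarrow> ('g \<Rightarrow> 'a::complex_inner \<Rightarrow> 'a) \<Rightarrow> ('g \<Rightarrow> 'g \<Rightarrow> complex) \<Rightarrow> bool" where
  "proj_unitary_rep G \<pi> \<mu> \<longleftrightarrow>
     (\<forall>g\<in>carrier G. unitary_op (\<pi> g)) \<and>
     (\<forall>g\<in>carrier G. \<forall>h\<in>carrier G. cmod (\<mu> g h) = 1 \<and>
        (\<forall>x. \<pi> g (\<pi> h x) = \<mu> g h *\<^sub>C \<pi> (g \<otimes>\<^bsub>G\<^esub> h) x))"

definition bessel_seq :: "'j set \<Rightarrow> ('j \<Rightarrow> 'a::complex_inner) \<Rightarrow> bool" where
  "bessel_seq J f \<longleftrightarrow> (\<exists>b. \<forall>x.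
     (\<lambda>j. (cmod (cinner x (f j)))\<^sup>2) summable_on J \<and>
     (\<Sum>\<^sub>\<infinity>j\<in>J. (cmod (cinner x (f j)))\<^sup>2) \<le> b * (norm x)\<^sup>2)"

definition frame :: "'j set \<Rightarrow> ('j \<Rightarrow> 'a::complex_inner) \<Rightarrow> bool" where
  "frame J f \<longleftrightarrow> (\<exists>a b. 0 < a \<and> 0 < b \<and> (\<forall>x.
     (\<lambda>j. (cmod (cinner x (f j)))\<^sup>2) summable_on J \<and>
     a * (norm x)\<^sup>2 \<le> (\<Sum>\<^sub>\<infinity>j\<in>J. (cmod (cinner x (f j)))\<^sup>2) \<and>
     (\<Sum>\<^sub>\<infinity>j\<in>J. (cmod (cinner x (f j)))\<^sup>2) \<le> b * (norm x)\<^sup>2))"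

definition bessel_vector ::
  "('g, 'b) monoid_scheme \<Rightarrow> ('g \<Rightarrow> 'a::complex_inner \<Rightarrow> 'a) \<Rightarrow> 'a \<Rightarrow> bool" where
  "bessel_vector G \<pi> \<eta> \<longleftrightarrow> bessel_seq (carrier G) (\<lambda>g. \<pi> g \<eta>)"

end

theory Submission imports Defs "HOL-Computational_Algebra.Formal_Power_Series" begin

section \<open>Basic facts on complex inner product spaces\<close>

lemma scaleC_zero_left[simp]: "(0::complex) *\<^sub>C (x::'a::complex_inner) = 0"
proof -
  have "(0::complex) *\<^sub>C x = 0 *\<^sub>C x + 0 *\<^sub>C x"
    using scaleC_add_left[of 0 0 x] by simp
  then show ?thesis by simp
qed

lemma scaleC_zero_right[simp]: "c *\<^sub>C (0::'a::complex_inner) = 0"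
proof -
  have "c *\<^sub>C (0::'a) = c *\<^sub>C 0 + c *\<^sub>C 0"
    using scaleC_add_right[of c 0 0] by simp
  then show ?thesis by simp
qed

lemma scaleC_minus_right: "c *\<^sub>C (- x) = - (c *\<^sub>C (x::'a::complex_inner))"
proof -
  have "c *\<^sub>C (- x) + c *\<^sub>C x = 0"
    using scaleC_add_right[of c "-x" x] by simp
  then show ?thesis by (simp add: eq_neg_iff_add_eq_0)
qed

lemma scaleC_diff_right: "c *\<^sub>C (x - y) = c *\<^sub>C x - c *\<^sub>C (y::'a::complex_inner)"
  by (simp only: scaleC_add_right scaleC_minus_right diff_conv_add_uminus)

lemma scaleC_minus_left: "(- c) *\<^sub>C (x::'a::complex_inner) = - (c *\<^sub>C x)"
proof -
  have "(- c) *\<^sub>C x + c *\<^sub>C x = 0"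
    using scaleC_add_left[of "-c" c x] by simp
  then show ?thesis by (simp add: eq_neg_iff_add_eq_0)
qed

lemma scaleC_diff_left: "(c - d) *\<^sub>C (x::'a::complex_inner) = c *\<^sub>C x - d *\<^sub>C x"
  using scaleC_add_left[of c "-d" x] by (simp add: scaleC_minus_left)

lemma cinner_zero_left[simp]: "cinner (0::'a::complex_inner) y = 0"
proof -
  have "cinner (0::'a) y = cinner 0 y + cinner 0 y"
    using cinner_add_left[of 0 0 y] by simp
  then show ?thesis by simp
qed

lemma cinner_minus_left: "cinner (- x) y = - cinner (x::'a::complex_inner) y"
proof -
  have "cinner (- x) y + cinner x y = 0"
    using cinner_add_left[of "-x" x y] by simp
  then show ?thesis by (simp add: eq_neg_iff_add_eq_0)
qed

lemma cinner_diff_left: "cinner (x - z) y = cinner x y - cinner (z::'a::complex_inner) y"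
  by (simp only: diff_conv_add_uminus cinner_add_left cinner_minus_left)

lemma cnj_cinner: "cnj (cinner x y) = cinner y (x::'a::complex_inner)"
  by (rule cinner_commute[where x=x and y=y, symmetric])

lemma cinner_add_right: "cinner x (y + z) = cinner x y + cinner x (z::'a::complex_inner)"
proof -
  have "cinner x (y + z) = cnj (cinner (y + z) x)" by (rule cnj_cinner[symmetric])
  also have "\<dots> = cnj (cinner y x) + cnj (cinner z x)" by (simp only: cinner_add_left complex_cnj_add)
  finally show ?thesis by (simp only: cnj_cinner)
qed

lemma cinner_scaleC_right: "cinner x (c *\<^sub>C y) = cnj c * cinner x (y::'a::complex_inner)"
proof -
  have "cinner x (c *\<^sub>C y) = cnj (cinner (c *\<^sub>C y) x)" by (rule cnj_cinner[symmetric])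
  also have "\<dots> = cnj c * cnj (cinner y x)" by (simp only: cinner_scaleC_left complex_cnj_mult)
  finally show ?thesis by (simp only: cnj_cinner)
qed

lemma cinner_zero_right[simp]: "cinner x (0::'a::complex_inner) = 0"
proof -
  have "cinner x (0::'a) = cnj (cinner 0 x)" by (rule cnj_cinner[symmetric])
  then show ?thesis by simp
qed

lemma cinner_minus_right: "cinner x (- y) = - cinner x (y::'a::complex_inner)"
proof -
  have "cinner x (- y) = cnj (cinner (- y) x)" by (rule cnj_cinner[symmetric])
  also have "\<dots> = - cnj (cinner y x)" by (simp only: cinner_minus_left complex_cnj_minus)
  finally show ?thesis by (simp only: cnj_cinner)
qed

lemma cinner_diff_right: "cinner x (y - z) = cinner x y - cinner x (z::'a::complex_inner)"
  by (simp only: diff_conv_add_uminus cinner_add_right cinner_minus_right)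

lemma cinner_scaleR_left: "cinner (r *\<^sub>R x) y = of_real r * cinner (x::'a::complex_inner) y"
  by (simp add: scaleR_scaleC cinner_scaleC_left)

lemma cinner_scaleR_right: "cinner x (r *\<^sub>R y) = of_real r * cinner x (y::'a::complex_inner)"
  by (simp add: scaleR_scaleC cinner_scaleC_right)

lemma cinner_sum_left: "cinner (sum f A) y = (\<Sum>a\<in>A. cinner (f a) (y::'a::complex_inner))"
  by (induction A rule: infinite_finite_induct) (auto simp: cinner_add_left)

lemma Re_cinner_self: "Re (cinner x x) = (norm (x::'a::complex_inner))\<^sup>2"
  by (simp add: cinner_self_norm)

lemma cinner_self_eq_0[simp]: "cinner x x = 0 \<longleftrightarrow> (x::'a::complex_inner) = 0"
  by (simp add: cinner_self_norm)

lemma norm_scaleC: "norm (c *\<^sub>C x) = cmod c * norm (x::'a::complex_inner)"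
proof -
  have "complex_of_real ((norm (c *\<^sub>C x))\<^sup>2) = cinner (c *\<^sub>C x) (c *\<^sub>C x)"
    by (rule cinner_self_norm[symmetric])
  also have "\<dots> = c * cnj c * cinner x x"
    by (simp add: cinner_scaleC_left cinner_scaleC_right)
  also have "\<dots> = complex_of_real ((cmod c)\<^sup>2) * complex_of_real ((norm x)\<^sup>2)"
    by (simp only: cinner_self_norm complex_norm_square)
  also have "\<dots> = complex_of_real ((cmod c)\<^sup>2 * (norm x)\<^sup>2)"
    by (rule of_real_mult[symmetric])
  finally have "(norm (c *\<^sub>C x))\<^sup>2 = ((cmod c) * norm x)\<^sup>2"
    unfolding of_real_eq_iff power_mult_distrib .
  then show ?thesis
    by (simp add: power2_eq_iff_nonneg)
qed

lemma cinner_eq_iff: "(\<forall>x. cinner x a = cinner x b) \<Longrightarrow> a = (b::'a::complex_inner)"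
proof -
  assume h: "\<forall>x. cinner x a = cinner x b"
  have "cinner (a - b) (a - b) = 0"
    using h by (simp add: cinner_diff_right)
  then show ?thesis by simp
qed

lemma norm_add_sq: "(norm (x + y))\<^sup>2 = (norm x)\<^sup>2 + (norm y)\<^sup>2 + 2 * Re (cinner x (y::'a::complex_inner))"
proof -
  have "(norm (x + y))\<^sup>2 = Re (cinner (x+y) (x+y))" by (simp add: Re_cinner_self)
  also have "\<dots> = Re (cinner x x) + Re (cinner y y) + Re (cinner x y) + Re (cinner y x)"
    by (simp add: cinner_add_left cinner_add_right)
  also have "Re (cinner y x) = Re (cinner x y)"
    by (subst cinner_commute) simp
  finally show ?thesis by (simp add: Re_cinner_self)
qed

lemma norm_diff_sq: "(norm (x - y))\<^sup>2 = (norm x)\<^sup>2 + (norm y)\<^sup>2 - 2 * Re (cinner x (y::'a::complex_inner))"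
  using norm_add_sq[of x "-y"] by (simp add: cinner_minus_right)

lemma proj_identity:
  fixes x y :: "'a::complex_inner"
  assumes "y \<noteq> 0"
  shows "(norm (x - (cinner x y / of_real ((norm y)\<^sup>2)) *\<^sub>C y))\<^sup>2
           = (norm x)\<^sup>2 - (cmod (cinner x y))\<^sup>2 / (norm y)\<^sup>2"
proof -
  define n where "n = (norm y)\<^sup>2"
  have n: "n > 0" using assms by (simp add: n_def)
  define c where "c = cinner x y"
  have "(norm (x - (c / of_real n) *\<^sub>C y))\<^sup>2 = (norm x)\<^sup>2 + (norm ((c / of_real n) *\<^sub>C y))\<^sup>2
        - 2 * Re (cinner x ((c / of_real n) *\<^sub>C y))"
    by (rule norm_diff_sq)
  also have "(norm ((c / of_real n) *\<^sub>C y))\<^sup>2 = (cmod c)\<^sup>2 / n"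
  proof -
    have "norm ((c / of_real n) *\<^sub>C y) = cmod c / n * norm y"
      using n by (simp add: norm_scaleC norm_divide)
    then have "(norm ((c / of_real n) *\<^sub>C y))\<^sup>2 = (cmod c)\<^sup>2 / n\<^sup>2 * n"
      by (simp add: power_mult_distrib power_divide n_def)
    also have "\<dots> = (cmod c)\<^sup>2 / n"
      using n by (simp add: power2_eq_square)
    finally show ?thesis .
  qed
  also have "Re (cinner x ((c / of_real n) *\<^sub>C y)) = (cmod c)\<^sup>2 / n"
  proof -
    have "cinner x ((c / of_real n) *\<^sub>C y) = cnj c * c / of_real n"
      by (simp add: cinner_scaleC_right c_def)
    also have "cnj c * c = of_real ((cmod c)\<^sup>2)"
      using complex_norm_square[of c] by (simp add: mult.commute)
    finally show ?thesis by (simp add: Re_divide_of_real)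
  qed
  finally show ?thesis by (simp add: c_def n_def)
qed

lemma cauchy_schwarz: "cmod (cinner x y) \<le> norm x * norm (y::'a::complex_inner)"
proof (cases "y = 0")
  case True then show ?thesis by simp
next
  case False
  have "0 \<le> (norm (x - (cinner x y / of_real ((norm y)\<^sup>2)) *\<^sub>C y))\<^sup>2"
    by (rule zero_le_power2)
  then have "0 \<le> (norm x)\<^sup>2 - (cmod (cinner x y))\<^sup>2 / (norm y)\<^sup>2"
    by (simp only: proj_identity[OF False])
  then have "(cmod (cinner x y))\<^sup>2 / (norm y)\<^sup>2 \<le> (norm x)\<^sup>2"
    by linarith
  moreover have "(norm y)\<^sup>2 > 0" using False by simp
  ultimately have "(cmod (cinner x y))\<^sup>2 \<le> (norm x)\<^sup>2 * (norm y)\<^sup>2"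
    by (simp add: pos_divide_le_eq)
  then have h: "(cmod (cinner x y))\<^sup>2 \<le> (norm x * norm y)\<^sup>2"
    by (simp add: power_mult_distrib)
  have "0 \<le> norm x * norm y" by simp
  with h show ?thesis by (rule power2_le_imp_le)
qed

section \<open>Riesz representation and adjoints\<close>

lemma scaleC_minus_one: "(-1::complex) *\<^sub>C x = - (x::'a::complex_inner)"
  by (simp add: scaleC_minus_left scaleC_one)

lemma scaleC_of_real: "complex_of_real r *\<^sub>C x = r *\<^sub>R (x::'a::complex_inner)"
  by (simp add: scaleR_scaleC)

definition bclf :: "('a::complex_inner \<Rightarrow> complex) \<Rightarrow> bool" where
  "bclf f \<longleftrightarrow> (\<forall>x y. f (x + y) = f x + f y) \<and> (\<forall>c x. f (c *\<^sub>C x) = c * f x) \<and>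
     (\<exists>K. \<forall>x. cmod (f x) \<le> norm x * K)"

lemma bclf_bounded_linear: "bclf f \<Longrightarrow> bounded_linear f"
  unfolding bclf_def
proof (elim conjE exE)
  fix K assume a: "\<forall>x y. f (x + y) = f x + f y" and s: "\<forall>c x. f (c *\<^sub>C x) = c * f x"
    and K: "\<forall>x. cmod (f x) \<le> norm x * K"
  show "bounded_linear f"
  proof (rule bounded_linear_intro[of f K])
    show "f (x + y) = f x + f y" for x y using a by blast
    show "f (r *\<^sub>R x) = r *\<^sub>R f x" for r x
      using s[rule_format, of "complex_of_real r" x] by (simp add: scaleR_scaleC scaleR_conv_of_real)
    show "norm (f x) \<le> norm x * K" for x using K by simp
  qed
qed

lemma projection_exists:
  fixes N :: "'a::chilbert_space set"
  assumes cl: "closed N" and z: "0 \<in> N" and ad: "\<And>x y. x \<in> N \<Longrightarrow> y \<in> N \<Longrightarrow> x + y \<in> N"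
    and sc: "\<And>c x. x \<in> N \<Longrightarrow> c *\<^sub>C x \<in> N"
  shows "\<exists>p\<in>N. \<forall>n\<in>N. cinner (u - p) n = 0"
proof -
  have mi: "x - y \<in> N" if "x \<in> N" "y \<in> N" for x y
  proof -
    have "(-1) *\<^sub>C y \<in> N" using sc that by blast
    then have "- y \<in> N" by (simp add: scaleC_minus_one)
    from ad[OF that(1) this] show ?thesis by simp
  qed
  have scr: "r *\<^sub>R x \<in> N" if "x \<in> N" for r x
    using sc[OF that, of "complex_of_real r"] by (simp add: scaleC_of_real)
  define D where "D = (\<lambda>n. (norm (u - n))\<^sup>2) ` N"
  define d where "d = Inf D"
  have Dne: "D \<noteq> {}" using z by (auto simp: D_def)
  have bdd: "bdd_below D" unfolding D_def by (rule bdd_belowI[of _ 0]) auto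
  have lower: "d \<le> (norm (u - n))\<^sup>2" if "n \<in> N" for n
    unfolding d_def D_def using bdd that by (auto intro!: cInf_lower simp: D_def)
  have "\<exists>n\<in>N. (norm (u - n))\<^sup>2 < d + inverse (real (Suc k))" for k
  proof -
    have "Inf D < d + inverse (real (Suc k))" by (simp add: d_def)
    from cInf_lessD[OF Dne this] show ?thesis by (auto simp: D_def)
  qed
  then obtain s where s: "\<And>k. s k \<in> N" and sb: "\<And>k. (norm (u - s k))\<^sup>2 < d + inverse (real (Suc k))"
    by metis
  have par: "(norm (s k - s m))\<^sup>2 \<le> 2 * inverse (real (Suc m)) + 2 * inverse (real (Suc k))" for k m
  proof -
    define a where "a = u - s m"
    define b where "b = u - s k"
    define mid where "mid = (1/2::real) *\<^sub>R (s m + s k)"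
    have midN: "mid \<in> N" unfolding mid_def by (rule scr, rule ad, rule s, rule s)
    have pl: "(norm (a - b))\<^sup>2 + (norm (a + b))\<^sup>2 = 2 * (norm a)\<^sup>2 + 2 * (norm b)\<^sup>2"
      using norm_add_sq[of a b] norm_diff_sq[of a b] by simp
    have e1: "a - b = s k - s m" by (simp add: a_def b_def)
    have e2: "a + b = 2 *\<^sub>R (u - mid)"
      by (simp add: a_def b_def mid_def algebra_simps scaleR_2)
    have e3: "(norm (2 *\<^sub>R (u - mid)))\<^sup>2 = 4 * (norm (u - mid))\<^sup>2"
      by (simp add: power_mult_distrib)
    have "(norm (s k - s m))\<^sup>2 + 4 * (norm (u - mid))\<^sup>2 = 2 * (norm a)\<^sup>2 + 2 * (norm b)\<^sup>2"
      using pl unfolding e1 e2 e3 .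
    moreover have "d \<le> (norm (u - mid))\<^sup>2" by (rule lower[OF midN])
    moreover have "(norm a)\<^sup>2 < d + inverse (real (Suc m))" using sb[of m] by (simp add: a_def)
    moreover have "(norm b)\<^sup>2 < d + inverse (real (Suc k))" using sb[of k] by (simp add: b_def)
    ultimately show ?thesis by linarith
  qed
  have "Cauchy s"
  proof (rule metric_CauchyI)
    fix e :: real assume e: "0 < e"
    obtain M :: nat where M: "4 / e\<^sup>2 < real M" using reals_Archimedean2 by blast
    have "dist (s m) (s n) < e" if "m \<ge> M" "n \<ge> M" for m n
    proof -
      have "inverse (real (Suc m)) \<le> inverse (real (Suc M))" using that
        by (simp add: le_imp_inverse_le)
      moreover have "inverse (real (Suc n)) \<le> inverse (real (Suc M))" using that
        by (simp add: le_imp_inverse_le)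
      moreover have "4 * inverse (real (Suc M)) < e\<^sup>2"
      proof -
        have "4 / e\<^sup>2 < real (Suc M)" using M by simp
        then have "4 < e\<^sup>2 * real (Suc M)" using e by (simp add: divide_less_eq mult.commute)
        then show ?thesis by (simp add: field_simps)
      qed
      ultimately have "(norm (s m - s n))\<^sup>2 < e\<^sup>2" using par[of m n] by linarith
      then show ?thesis using e by (simp add: dist_norm power2_less_imp_less)
    qed
    then show "\<exists>M. \<forall>m\<ge>M. \<forall>n\<ge>M. dist (s m) (s n) < e" by blast
  qed
  then obtain p where sp: "s \<longlonglongrightarrow> p" using Cauchy_convergent_iff convergent_def by blast
  have pN: "p \<in> N" using closed_sequentially[OF cl] s sp by blast
  have t1: "(\<lambda>k. (norm (u - s k))\<^sup>2) \<longlonglongrightarrow> (norm (u - p))\<^sup>2"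
    by (intro tendsto_intros sp)
  have t2: "(\<lambda>k. (norm (u - s k))\<^sup>2) \<longlonglongrightarrow> d"
  proof (rule tendsto_sandwich[of "\<lambda>_. d" _ _ "\<lambda>k. d + inverse (real (Suc k))"])
    show "\<forall>\<^sub>F k in sequentially. d \<le> (norm (u - s k))\<^sup>2" using lower s by (simp add: always_eventually)
    show "\<forall>\<^sub>F k in sequentially. (norm (u - s k))\<^sup>2 \<le> d + inverse (real (Suc k))"
      by (rule always_eventually) (use sb less_imp_le in blast)
    show "(\<lambda>k. d) \<longlonglongrightarrow> d" by simp
    show "(\<lambda>k. d + inverse (real (Suc k))) \<longlonglongrightarrow> d"
      using tendsto_add[OF tendsto_const[of d] LIMSEQ_inverse_real_of_nat] by simp
  qed
  have pd: "(norm (u - p))\<^sup>2 = d" using LIMSEQ_unique[OF t1 t2] .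
  have "cinner (u - p) n = 0" if nN: "n \<in> N" for n
  proof (cases "n = 0")
    case True then show ?thesis by simp
  next
    case False
    define c where "c = cinner (u - p) n"
    define t where "t = c / of_real ((norm n)\<^sup>2)"
    have "p + t *\<^sub>C n \<in> N" using ad[OF pN sc[OF nN]] .
    from lower[OF this] have "d \<le> (norm (u - p - t *\<^sub>C n))\<^sup>2" by (simp add: diff_diff_eq)
    also have "\<dots> = (norm (u - p))\<^sup>2 - (cmod c)\<^sup>2 / (norm n)\<^sup>2"
      unfolding t_def c_def by (rule proj_identity[OF False])
    finally have "(cmod c)\<^sup>2 / (norm n)\<^sup>2 \<le> 0" using pd by simp
    moreover have "(norm n)\<^sup>2 > 0" using False by simp
    ultimately have "(cmod c)\<^sup>2 \<le> 0" by (simp add: divide_le_0_iff)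
    then show ?thesis by (simp add: c_def)
  qed
  then show ?thesis using pN by blast
qed

lemma riesz:
  fixes f :: "'a::chilbert_space \<Rightarrow> complex"
  assumes "bclf f"
  shows "\<exists>z. \<forall>x. f x = cinner x z"
proof -
  have add: "\<And>x y. f (x + y) = f x + f y" and sc: "\<And>c x. f (c *\<^sub>C x) = c * f x"
    using assms by (auto simp: bclf_def)
  have bl: "bounded_linear f" using assms by (rule bclf_bounded_linear)
  have f0: "f 0 = 0" using bl by (rule linear_simps)
  show ?thesis
  proof (cases "\<forall>x. f x = 0")
    case True then show ?thesis by (intro exI[of _ 0]) simp
  next
    case False
    then obtain u where u: "f u \<noteq> 0" by blast
    define N where "N = f -` {0}"
    have cl: "closed N" unfolding N_def
      by (rule continuous_closed_vimage) (simp_all add: bounded_linear.isCont[OF bl] continuous_at_imp_continuous_at_within)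
    obtain p where pN: "p \<in> N" and orth: "\<forall>n\<in>N. cinner (u - p) n = 0"
      using projection_exists[OF cl, of u] f0 add sc by (auto simp: N_def)
    define w where "w = u - p"
    have fw: "f w = f u" using pN bl by (simp add: w_def N_def linear_simps)
    then have w0: "w \<noteq> 0" using u f0 by auto
    define z where "z = (cnj (f w) / of_real ((norm w)\<^sup>2)) *\<^sub>C w"
    have "f x = cinner x z" for x
    proof -
      define v where "v = x - (f x / f w) *\<^sub>C w"
      have "f v = 0" using u fw bl by (simp add: v_def linear_simps sc)
      then have "cinner w v = 0" using orth by (simp add: N_def w_def)
      then have "cinner v w = 0" using cnj_cinner[of w v] by simp
      then have "cinner x w = (f x / f w) * of_real ((norm w)\<^sup>2)"
        by (simp add: v_def cinner_diff_left cinner_scaleC_left cinner_self_norm)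
      then show ?thesis using u fw w0
        by (simp add: z_def cinner_scaleC_right field_simps)
    qed
    then show ?thesis by blast
  qed
qed

lemma bounded_clinear_add: "bounded_clinear f \<Longrightarrow> f (x + y) = f x + f y"
  by (simp add: bounded_clinear_def clinear_def)

lemma bounded_clinear_scaleC: "bounded_clinear f \<Longrightarrow> f (c *\<^sub>C x) = c *\<^sub>C f x"
  by (simp add: bounded_clinear_def clinear_def)

lemma bounded_clinear_bounded_linear: "bounded_clinear f \<Longrightarrow> bounded_linear f"
  unfolding bounded_clinear_def clinear_def
proof (elim conjE exE)
  fix K assume a: "\<forall>x y. f (x + y) = f x + f y" and s: "\<forall>c x. f (c *\<^sub>C x) = c *\<^sub>C f x"
    and K: "\<forall>x. norm (f x) \<le> norm x * K"
  show "bounded_linear f"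
  proof (rule bounded_linear_intro[of f K])
    show "f (x + y) = f x + f y" for x y using a by blast
    show "f (r *\<^sub>R x) = r *\<^sub>R f x" for r x
      using s by (simp add: scaleR_scaleC)
    show "norm (f x) \<le> norm x * K" for x using K by simp
  qed
qed

lemma adjoint_exists:
  fixes T :: "'a::chilbert_space \<Rightarrow> 'a"
  assumes "bounded_clinear T"
  shows "\<exists>S. \<forall>x y. cinner (T x) y = cinner x (S y)"
proof -
  obtain K where K: "\<And>x. norm (T x) \<le> norm x * K"
    using assms by (auto simp: bounded_clinear_def)
  have "\<exists>z. \<forall>x. cinner (T x) y = cinner x z" for y
  proof (rule riesz)
    show "bclf (\<lambda>x. cinner (T x) y)"
      unfolding bclf_def
    proof (intro conjI allI exI)
      show "cinner (T (x + x')) y = cinner (T x) y + cinner (T x') y" for x x'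
        using assms by (simp add: bounded_clinear_add cinner_add_left)
      show "cinner (T (c *\<^sub>C x)) y = c * cinner (T x) y" for c x
        using assms by (simp add: bounded_clinear_scaleC cinner_scaleC_left)
      show "cmod (cinner (T x) y) \<le> norm x * (K * norm y)" for x
      proof -
        have "cmod (cinner (T x) y) \<le> norm (T x) * norm y" by (rule cauchy_schwarz)
        also have "\<dots> \<le> norm x * K * norm y" using K[of x] by (simp add: mult_right_mono)
        finally show ?thesis by (simp add: mult.assoc)
      qed
    qed
  qed
  then show ?thesis by metis
qed

lemma cadjoint_prop:
  fixes T :: "'a::chilbert_space \<Rightarrow> 'a"
  assumes "bounded_clinear T"
  shows "cinner (T x) y = cinner x (cadjoint T y)"
proof -
  have "\<forall>x y. cinner (T x) y = cinner x (cadjoint T y)"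
    unfolding cadjoint_def using someI_ex[OF adjoint_exists[OF assms]] .
  then show ?thesis by blast
qed

lemma cadjoint_unique:
  fixes T :: "'a::chilbert_space \<Rightarrow> 'a"
  assumes "bounded_clinear T" and "\<And>x y. cinner (T x) y = cinner x (S y)"
  shows "cadjoint T = S"
proof
  fix y
  show "cadjoint T y = S y"
    by (rule cinner_eq_iff) (metis assms cadjoint_prop)
qed

section \<open>A Banach algebra of bounded real-linear operators\<close>

typedef (overloaded) 'a bop = "UNIV :: ('a::real_normed_vector \<Rightarrow>\<^sub>L 'a) set" by simp

setup_lifting type_definition_bop

instantiation bop :: (real_normed_vector) real_normed_algebra
begin
lift_definition zero_bop :: "'a bop" is 0 .
lift_definition plus_bop :: "'a bop \<Rightarrow> 'a bop \<Rightarrow> 'a bop" is "(+)" .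
lift_definition minus_bop :: "'a bop \<Rightarrow> 'a bop \<Rightarrow> 'a bop" is "(-)" .
lift_definition uminus_bop :: "'a bop \<Rightarrow> 'a bop" is uminus .
lift_definition scaleR_bop :: "real \<Rightarrow> 'a bop \<Rightarrow> 'a bop" is scaleR .
lift_definition times_bop :: "'a bop \<Rightarrow> 'a bop \<Rightarrow> 'a bop" is blinfun_compose .
lift_definition norm_bop :: "'a bop \<Rightarrow> real" is norm .
definition sgn_bop :: "'a bop \<Rightarrow> 'a bop" where "sgn_bop x = scaleR (inverse (norm x)) x"
definition dist_bop :: "'a bop \<Rightarrow> 'a bop \<Rightarrow> real" where "dist_bop a b = norm (a - b)"
definition uniformity_bop :: "('a bop \<times> 'a bop) filter" where
  "uniformity_bop = (INF e\<in>{0 <..}. principal {(x, y). dist x y < e})"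
definition open_bop :: "'a bop set \<Rightarrow> bool" where
  "open_bop S = (\<forall>x\<in>S. \<forall>\<^sub>F (x', y) in uniformity. x' = x \<longrightarrow> y \<in> S)"
instance
  apply standard
  unfolding dist_bop_def open_bop_def sgn_bop_def uniformity_bop_def
  apply (rule refl | (transfer, auto intro!: blinfun_eqI simp: blinfun.bilinear_simps
        norm_triangle_ineq norm_blinfun_compose algebra_simps))+
  done
end

lemma dist_bop_Rep: "dist a b = dist (Rep_bop a) (Rep_bop b)"
  unfolding dist_bop_def dist_norm by transfer simp

instance bop :: (banach) banach
proof
  fix X :: "nat \<Rightarrow> 'a bop"
  assume "Cauchy X"
  then have "Cauchy (\<lambda>n. Rep_bop (X n))"
    unfolding Cauchy_def dist_bop_Rep .
  then obtain L where L: "(\<lambda>n. Rep_bop (X n)) \<longlonglongrightarrow> L"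
    using Cauchy_convergent_iff convergent_def by blast
  have "X \<longlonglongrightarrow> Abs_bop L"
    using L unfolding lim_sequentially dist_bop_Rep by (simp add: Abs_bop_inverse)
  then show "convergent X" by (auto simp: convergent_def)
qed

instantiation bop :: (real_normed_vector) monoid_mult
begin
lift_definition one_bop :: "'a bop" is id_blinfun .
instance
  by standard (transfer, auto intro!: blinfun_eqI)+
end

lift_definition app :: "'a::real_normed_vector bop \<Rightarrow> 'a \<Rightarrow> 'a" is blinfun_apply .

lemma app_times[simp]: "app (S * T) x = app S (app T x)" by transfer simp
lemma app_one[simp]: "app 1 x = x" by transfer simp
lemma app_plus[simp]: "app (S + T) x = app S x + app T x" by transfer (simp add: blinfun.bilinear_simps)
lemma app_minus[simp]: "app (S - T) x = app S x - app T x" by transfer (simp add: blinfun.bilinear_simps)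
lemma app_uminus[simp]: "app (- S) x = - app S x" by transfer (simp add: blinfun.bilinear_simps)
lemma app_zero[simp]: "app 0 x = 0" by transfer simp
lemma app_scaleR[simp]: "app (r *\<^sub>R S) x = r *\<^sub>R app S x" by transfer (simp add: blinfun.bilinear_simps)
lemma norm_app: "norm (app S x) \<le> norm S * norm x" by transfer (rule norm_blinfun)
lemma app_bounded_linear: "bounded_linear (app S)" by transfer (rule blinfun.bounded_linear_right)
lemma app_bop_eqI: "(\<And>x. app S x = app T x) \<Longrightarrow> S = T"
  by transfer (rule blinfun_eqI)
lemma norm_bop_bound: "0 \<le> b \<Longrightarrow> (\<And>x. norm (app S x) \<le> b * norm x) \<Longrightarrow> norm S \<le> b"
  by transfer (rule norm_blinfun_bound)
lemma norm_one_bop_le: "norm (1::'a::real_normed_vector bop) \<le> 1"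
  by transfer (rule norm_blinfun_id_le)

lemma app_left_bounded_linear: "bounded_linear (\<lambda>S. app S x)"
  by (rule bounded_linear_intro[where K="norm x"]) (simp_all add: norm_app)

definition mk :: "('a::real_normed_vector \<Rightarrow> 'a) \<Rightarrow> 'a bop" where
  "mk f = Abs_bop (Blinfun f)"

lemma app_mk: "bounded_linear f \<Longrightarrow> app (mk f) = f"
  unfolding mk_def by (simp add: app.rep_eq Abs_bop_inverse bounded_linear_Blinfun_apply)

instance chilbert_space \<subseteq> banach ..

section \<open>Binomial power series in a Banach algebra element\<close>

lemma norm_power_bop: "norm ((Y::'a::real_normed_vector bop) ^ n) \<le> norm Y ^ n"
proof (induction n)
  case 0 then show ?case using norm_one_bop_le by simp
next
  case (Suc n)
  have "norm (Y ^ Suc n) = norm (Y * Y ^ n)" by simp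
  also have "\<dots> \<le> norm Y * norm (Y ^ n)" by (rule norm_mult_ineq)
  also have "\<dots> \<le> norm Y * norm Y ^ n" using Suc by (simp add: mult_left_mono)
  finally show ?case by simp
qed

lemma gchoose_abs_summable:
  fixes q :: real
  assumes "0 \<le> q" "q < 1"
  shows "summable (\<lambda>n. \<bar>a gchoose n\<bar> * q ^ n)"
proof -
  have "ereal (norm q) < conv_radius (\<lambda>n. a gchoose n)"
    using assms by (simp add: conv_radius_gchoose)
  from abs_summable_in_conv_radius[OF this] show ?thesis
    using assms by (simp add: abs_mult power_abs)
qed

definition phi :: "'a::real_normed_vector bop \<Rightarrow> real \<Rightarrow> 'a bop" where
  "phi Y a = (\<Sum>n. (a gchoose n) *\<^sub>R Y ^ n)"

lemma phi_abs_summable: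
  fixes Y :: "'a::real_normed_vector bop"
  assumes "norm Y < 1"
  shows "summable (\<lambda>n. norm ((a gchoose n) *\<^sub>R Y ^ n))"
proof (rule summable_comparison_test[OF _ gchoose_abs_summable[of "norm Y" a]])
  show "\<exists>N. \<forall>n\<ge>N. norm (norm ((a gchoose n) *\<^sub>R Y ^ n)) \<le> \<bar>a gchoose n\<bar> * norm Y ^ n"
    using norm_power_bop[of Y] by (auto intro!: mult_left_mono)
qed (use assms in auto)

lemma phi_summable:
  fixes Y :: "'a::banach bop"
  assumes "norm Y < 1"
  shows "summable (\<lambda>n. (a gchoose n) *\<^sub>R Y ^ n)"
  using phi_abs_summable[OF assms] by (rule summable_norm_cancel)

lemma phi_mult:
  fixes Y :: "'a::banach bop"
  assumes "norm Y < 1"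
  shows "phi Y a * phi Y b = phi Y (a + b)"
proof -
  have "phi Y a * phi Y b = (\<Sum>k. \<Sum>i\<le>k. ((a gchoose i) *\<^sub>R Y ^ i) * ((b gchoose (k - i)) *\<^sub>R Y ^ (k - i)))"
    unfolding phi_def by (rule Cauchy_product[OF phi_abs_summable[OF assms] phi_abs_summable[OF assms]])
  also have "\<dots> = (\<Sum>k. ((a + b) gchoose k) *\<^sub>R Y ^ k)"
  proof (rule suminf_cong)
    fix k
    have "(\<Sum>i\<le>k. ((a gchoose i) *\<^sub>R Y ^ i) * ((b gchoose (k - i)) *\<^sub>R Y ^ (k - i)))
        = (\<Sum>i\<le>k. ((a gchoose i) * (b gchoose (k - i))) *\<^sub>R Y ^ k)"
    proof (rule sum.cong)
      fix i assume "i \<in> {..k}"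
      then have "Y ^ i * Y ^ (k - i) = Y ^ k" by (simp add: power_add[symmetric])
      then show "((a gchoose i) *\<^sub>R Y ^ i) * ((b gchoose (k - i)) *\<^sub>R Y ^ (k - i))
          = ((a gchoose i) * (b gchoose (k - i))) *\<^sub>R Y ^ k"
        by simp
    qed simp
    also have "\<dots> = (\<Sum>i\<le>k. (a gchoose i) * (b gchoose (k - i))) *\<^sub>R Y ^ k"
      by (simp add: scaleR_sum_left)
    also have "(\<Sum>i\<le>k. (a gchoose i) * (b gchoose (k - i))) = (a + b) gchoose k"
      using gbinomial_Vandermonde[of a b k] by (simp add: atLeast0AtMost)
    finally show "(\<Sum>i\<le>k. ((a gchoose i) *\<^sub>R Y ^ i) * ((b gchoose (k - i)) *\<^sub>R Y ^ (k - i)))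
        = ((a + b) gchoose k) *\<^sub>R Y ^ k" .
  qed
  finally show ?thesis by (simp add: phi_def)
qed

lemma phi_0: "phi Y 0 = 1"
proof -
  have "phi Y 0 = (\<Sum>n\<in>{0}. (0 gchoose n) *\<^sub>R Y ^ n)"
    unfolding phi_def by (rule suminf_finite) (auto simp: gbinomial_0_left)
  then show ?thesis by simp
qed

lemma gchoose_one: "((1::real) gchoose n) = (if n \<le> 1 then 1 else 0)"
proof -
  have "((1::real) gchoose n) = of_nat (1 choose n)"
    by (subst binomial_gbinomial) simp
  then show ?thesis by (cases n) (auto simp: binomial_eq_0)
qed

lemma phi_1: "phi Y 1 = 1 + Y"
proof -
  have "phi Y 1 = (\<Sum>n\<in>{0,1}. (1 gchoose n) *\<^sub>R Y ^ n)"
    unfolding phi_def by (rule suminf_finite) (auto simp: gchoose_one)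
  then show ?thesis by (simp add: gchoose_one)
qed

lemma phi_commute:
  fixes Y W :: "'a::banach bop"
  assumes "norm Y < 1" and c: "W * Y = Y * W"
  shows "W * phi Y a = phi Y a * W"
proof -
  have pw: "W * Y ^ n = Y ^ n * W" for n
  proof (induction n)
    case (Suc n)
    have "W * Y ^ Suc n = (W * Y) * Y ^ n" by (simp add: mult.assoc)
    also have "\<dots> = Y * (W * Y ^ n)" by (simp add: c mult.assoc)
    also have "\<dots> = Y ^ Suc n * W" by (simp add: Suc mult.assoc)
    finally show ?case .
  qed simp
  have s: "summable (\<lambda>n. (a gchoose n) *\<^sub>R Y ^ n)" by (rule phi_summable[OF assms(1)])
  have "W * phi Y a = (\<Sum>n. W * ((a gchoose n) *\<^sub>R Y ^ n))"
    unfolding phi_def by (rule suminf_mult[OF s, symmetric])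
  also have "\<dots> = (\<Sum>n. ((a gchoose n) *\<^sub>R Y ^ n) * W)"
    by (simp add: pw)
  also have "\<dots> = phi Y a * W"
    unfolding phi_def by (rule suminf_mult2[OF s, symmetric])
  finally show ?thesis .
qed

lemma app_suminf:
  fixes X :: "nat \<Rightarrow> 'a::banach bop"
  assumes "summable X"
  shows "app (suminf X) x = (\<Sum>n. app (X n) x)"
  using bounded_linear.suminf[OF app_left_bounded_linear assms] .

lemma bl_cinner_left: "bounded_linear (\<lambda>v. cinner v (y::'a::complex_inner))"
proof (rule bounded_linear_intro[where K="norm y"])
  show "cinner (v + w) y = cinner v y + cinner w y" for v w by (rule cinner_add_left)
  show "cinner (r *\<^sub>R v) y = r *\<^sub>R cinner v y" for r v
    by (simp add: cinner_scaleR_left scaleR_conv_of_real)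
  show "norm (cinner v y) \<le> norm v * norm y" for v by (simp add: cauchy_schwarz)
qed

lemma bl_cinner_right: "bounded_linear (\<lambda>v. cinner (y::'a::complex_inner) v)"
proof (rule bounded_linear_intro[where K="norm y"])
  show "cinner y (v + w) = cinner y v + cinner y w" for v w by (rule cinner_add_right)
  show "cinner y (r *\<^sub>R v) = r *\<^sub>R cinner y v" for r v
    by (simp add: cinner_scaleR_right scaleR_conv_of_real)
  show "norm (cinner y v) \<le> norm v * norm y" for v using cauchy_schwarz[of y v] by (simp add: mult.commute)
qed

definition selfadj :: "'a::complex_inner bop \<Rightarrow> bool" where
  "selfadj S \<longleftrightarrow> (\<forall>x y. cinner (app S x) y = cinner x (app S y))"

lemma phi_selfadj:
  fixes Y :: "'a::{chilbert_space} bop"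
  assumes "norm Y < 1" and sa: "selfadj Y"
  shows "selfadj (phi Y a)"
  unfolding selfadj_def
proof (intro allI)
  fix x y
  have pw: "cinner (app (Y ^ n) x) y = cinner x (app (Y ^ n) y)" for n x y
  proof (induction n arbitrary: x y)
    case (Suc n)
    have "cinner (app (Y ^ Suc n) x) y = cinner (app Y (app (Y ^ n) x)) y" by simp
    also have "\<dots> = cinner (app (Y ^ n) x) (app Y y)" using sa by (simp add: selfadj_def)
    also have "\<dots> = cinner x (app (Y ^ n) (app Y y))" by (rule Suc)
    also have "\<dots> = cinner x (app (Y ^ Suc n) y)"
      by (simp add: power_commutes[symmetric])
    finally show ?case .
  qed simp
  have s: "summable (\<lambda>n. (a gchoose n) *\<^sub>R Y ^ n)" by (rule phi_summable[OF assms(1)])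
  have s1: "summable (\<lambda>n. app ((a gchoose n) *\<^sub>R Y ^ n) x)"
    using bounded_linear.summable[OF app_left_bounded_linear s] .
  have s2: "summable (\<lambda>n. app ((a gchoose n) *\<^sub>R Y ^ n) y)"
    using bounded_linear.summable[OF app_left_bounded_linear s] .
  have "cinner (app (phi Y a) x) y = (\<Sum>n. cinner (app ((a gchoose n) *\<^sub>R Y ^ n) x) y)"
    unfolding phi_def app_suminf[OF s] using bounded_linear.suminf[OF bl_cinner_left s1] .
  also have "\<dots> = (\<Sum>n. cinner x (app ((a gchoose n) *\<^sub>R Y ^ n) y))"
    by (simp add: cinner_scaleR_left cinner_scaleR_right pw)
  also have "\<dots> = cinner x (app (phi Y a) y)"
    unfolding phi_def app_suminf[OF s] using bounded_linear.suminf[OF bl_cinner_right s2, symmetric] .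
  finally show "cinner (app (phi Y a) x) y = cinner x (app (phi Y a) y)" .
qed

section \<open>Complex linearity from commuting with multiplication by i\<close>

lemma bl_J: "bounded_linear (\<lambda>x::'a::complex_inner. \<i> *\<^sub>C x)"
proof (rule bounded_linear_intro[where K=1])
  show "\<i> *\<^sub>C (x + y) = \<i> *\<^sub>C x + \<i> *\<^sub>C y" for x y :: 'a by (rule scaleC_add_right)
  show "\<i> *\<^sub>C (r *\<^sub>R x) = r *\<^sub>R (\<i> *\<^sub>C x)" for r and x :: 'a
    by (simp add: scaleR_scaleC scaleC_scaleC mult.commute)
  show "norm (\<i> *\<^sub>C x) \<le> norm x * 1" for x :: 'a by (simp add: norm_scaleC)
qed

lemma scaleC_decomp: "c *\<^sub>C x = Re c *\<^sub>R x + Im c *\<^sub>R (\<i> *\<^sub>C (x::'a::complex_inner))"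
proof -
  have "c *\<^sub>C x = (complex_of_real (Re c) + \<i> * complex_of_real (Im c)) *\<^sub>C x"
    using complex_eq[of c] by simp
  also have "\<dots> = complex_of_real (Re c) *\<^sub>C x + (complex_of_real (Im c) * \<i>) *\<^sub>C x"
    by (simp add: scaleC_add_left mult.commute)
  also have "\<dots> = Re c *\<^sub>R x + Im c *\<^sub>R (\<i> *\<^sub>C x)"
    by (simp add: scaleR_scaleC scaleC_scaleC)
  finally show ?thesis .
qed

lemma bounded_clinearI_J:
  fixes f :: "'a::complex_inner \<Rightarrow> 'a"
  assumes bl: "bounded_linear f" and J: "\<And>x. f (\<i> *\<^sub>C x) = \<i> *\<^sub>C f x"
  shows "bounded_clinear f"
  unfolding bounded_clinear_def clinear_def
proof (intro conjI allI)
  show "f (x + y) = f x + f y" for x y using bl by (simp add: linear_simps)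
  show "f (c *\<^sub>C x) = c *\<^sub>C f x" for c x
  proof -
    have "f (c *\<^sub>C x) = f (Re c *\<^sub>R x + Im c *\<^sub>R (\<i> *\<^sub>C x))" by (simp only: scaleC_decomp[of c x])
    also have "\<dots> = Re c *\<^sub>R f x + Im c *\<^sub>R f (\<i> *\<^sub>C x)" using bl by (simp add: linear_simps)
    also have "\<dots> = c *\<^sub>C f x" by (simp only: J scaleC_decomp[of c "f x", symmetric])
    finally show ?thesis .
  qed
  show "\<exists>K. \<forall>x. norm (f x) \<le> norm x * K"
    using bounded_linear.bounded[OF bl] by blast
qed

lemma prod_sum:
  fixes f :: "'g \<times> nat \<Rightarrow> real"
  assumes fin: "finite I" and nn: "\<And>x. f x \<ge> 0"
    and sm: "\<And>i. i \<in> I \<Longrightarrow> (\<lambda>g. f (g, i)) summable_on G"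
  shows "f summable_on (G \<times> I) \<and> infsum f (G \<times> I) = (\<Sum>i\<in>I. infsum (\<lambda>g. f (g, i)) G)"
proof -
  have gen: "J \<subseteq> I \<Longrightarrow> (\<lambda>g. \<Sum>i\<in>J. f (g, i)) summable_on G \<and>
      infsum (\<lambda>g. \<Sum>i\<in>J. f (g, i)) G = (\<Sum>i\<in>J. infsum (\<lambda>g. f (g, i)) G)" for J
    using finite_subset[OF _ fin, of J]
  proof (induction J rule: infinite_finite_induct)
    case (insert j J)
    then have sj: "(\<lambda>g. f (g, j)) summable_on G" using sm by blast
    from insert have IH: "(\<lambda>g. \<Sum>i\<in>J. f (g, i)) summable_on G"
      "infsum (\<lambda>g. \<Sum>i\<in>J. f (g, i)) G = (\<Sum>i\<in>J. infsum (\<lambda>g. f (g, i)) G)" by auto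
    show ?case using insert(1,2) IH sj
      by (simp add: summable_on_add infsum_add)
  qed auto
  have S: "f summable_on Sigma G (\<lambda>_. I)"
  proof (rule summable_on_SigmaI[where g="\<lambda>g. \<Sum>i\<in>I. f (g, i)"])
    show "((\<lambda>y. f (x, y)) has_sum (\<Sum>i\<in>I. f (x, i))) I" for x
      using fin by (rule has_sum_finiteI) simp
    show "(\<lambda>g. \<Sum>i\<in>I. f (g, i)) summable_on G" using gen[of I] by simp
    show "0 \<le> f (x, y)" for x y by (rule nn)
  qed
  have "infsum f (G \<times> I) = infsum (\<lambda>x. infsum (\<lambda>y. f (x, y)) I) G"
    using infsum_Sigma_banach[OF S] by simp
  also have "\<dots> = infsum (\<lambda>x. \<Sum>y\<in>I. f (x, y)) G"
    using fin by simp
  also have "\<dots> = (\<Sum>i\<in>I. infsum (\<lambda>g. f (g, i)) G)" using gen[of I] by simp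
  finally show ?thesis using S by simp
qed

lemma bop_comm_mult:
  fixes W X Z :: "'a::real_normed_vector bop"
  assumes "W * X = X * W" "W * Z = Z * W"
  shows "W * (X * Z) = (X * Z) * W"
proof -
  have "W * (X * Z) = (W * X) * Z" by (simp only: mult.assoc)
  also have "\<dots> = X * (W * Z)" by (simp only: assms(1) mult.assoc)
  also have "\<dots> = (X * Z) * W" by (simp only: assms(2) mult.assoc)
  finally show ?thesis .
qed

lemma bop_comm_scaleR:
  fixes W X :: "'a::real_normed_vector bop"
  assumes "W * X = X * W"
  shows "W * (r *\<^sub>R X) = (r *\<^sub>R X) * W"
  by (simp add: assms)

lemma bop_commI:
  fixes S T :: "'a::real_normed_vector bop"
  assumes "\<And>x. app S (app T x) = app T (app S x)"
  shows "S * T = T * S"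
  by (rule app_bop_eqI) (simp add: assms)

theorem lemma3p1:
  fixes G :: "'g monoid"
    and \<pi> :: "'g \<Rightarrow> 'h::chilbert_space \<Rightarrow> 'h"
    and \<mu> :: "'g \<Rightarrow> 'g \<Rightarrow> complex"
    and k :: nat
    and \<xi> \<eta> :: "nat \<Rightarrow> 'h"
    and A :: "'h \<Rightarrow> 'h"
  assumes "group G"
    and "countable (carrier G)"
    and "proj_unitary_rep G \<pi> \<mu>"
    and "finite_von_neumann_algebra (commutant (\<pi> ` carrier G))"
    and "frame (carrier G \<times> {1..k}) (\<lambda>(g, i). \<pi> g (\<xi> i))"
    and "A \<in> commutant (\<pi> ` carrier G)"
    and "\<forall>i\<in>{1..k}. bessel_vector G \<pi> (\<eta> i)"
    and "\<forall>i\<in>{1..k}. \<xi> i = A (\<eta> i)"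
  shows "invertible_op A \<and> frame (carrier G \<times> {1..k}) (\<lambda>(g, i). \<pi> g (\<eta> i))"
proof -
  define M where "M = commutant (\<pi> ` carrier G)"
  define I where "I = carrier G \<times> {1..k}"
  have vn: "\<And>T. T \<in> M \<Longrightarrow> cadjoint T \<in> M"
    and fin: "\<And>V. V \<in> M \<Longrightarrow> cadjoint V \<circ> V = id \<Longrightarrow> V \<circ> cadjoint V = id"
    using assms(4) by (auto simp: finite_von_neumann_algebra_def von_neumann_algebra_def M_def)
  have AM: "A \<in> M" using assms(6) by (simp add: M_def)
  have Abc: "bounded_clinear A" using AM by (simp add: M_def commutant_def)
  have Acomm: "\<And>g v. g \<in> carrier G \<Longrightarrow> A (\<pi> g v) = \<pi> g (A v)"
    using AM by (auto simp: M_def commutant_def fun_eq_iff)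
  define Ad where "Ad = cadjoint A"
  have AdM: "Ad \<in> M" using vn[OF AM] by (simp add: Ad_def)
  have Adbc: "bounded_clinear Ad" using AdM by (simp add: M_def commutant_def)
  have Adcomm: "\<And>g v. g \<in> carrier G \<Longrightarrow> Ad (\<pi> g v) = \<pi> g (Ad v)"
    using AdM by (auto simp: M_def commutant_def fun_eq_iff)
  have adj: "\<And>x y. cinner (A x) y = cinner x (Ad y)"
    unfolding Ad_def by (rule cadjoint_prop[OF Abc])
  have adj2: "\<And>x y. cinner (Ad x) y = cinner x (A y)"
  proof -
    fix x y
    have "cinner (Ad x) y = cnj (cinner y (Ad x))" by (simp add: cnj_cinner)
    also have "\<dots> = cnj (cinner (A y) x)" by (simp add: adj)
    also have "\<dots> = cinner x (A y)" by (simp add: cnj_cinner)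
    finally show "cinner (Ad x) y = cinner x (A y)" .
  qed
  have pibc: "\<And>g. g \<in> carrier G \<Longrightarrow> bounded_clinear (\<pi> g)"
    using assms(3) by (auto simp: proj_unitary_rep_def unitary_op_def)

  define Sx where "Sx = (\<lambda>x. infsum (\<lambda>j. (cmod (cinner x ((\<lambda>(g, i). \<pi> g (\<xi> i)) j)))\<^sup>2) I)"
  define Se where "Se = (\<lambda>x. infsum (\<lambda>j. (cmod (cinner x ((\<lambda>(g, i). \<pi> g (\<eta> i)) j)))\<^sup>2) I)"

  have key: "Sx x = Se (Ad x)" for x
    unfolding Sx_def Se_def
  proof (rule infsum_cong)
    fix j assume "j \<in> I"
    then obtain g i where j: "j = (g, i)" and g: "g \<in> carrier G" and i: "i \<in> {1..k}"
      by (auto simp: I_def)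
    have "cinner x (\<pi> g (\<xi> i)) = cinner x (A (\<pi> g (\<eta> i)))"
      using assms(8) i Acomm[OF g] by simp
    also have "\<dots> = cinner (Ad x) (\<pi> g (\<eta> i))" by (simp add: adj2)
    finally show "(cmod (cinner x ((\<lambda>(g, i). \<pi> g (\<xi> i)) j)))\<^sup>2
        = (cmod (cinner (Ad x) ((\<lambda>(g, i). \<pi> g (\<eta> i)) j)))\<^sup>2"
      by (simp add: j)
  qed

  have "\<forall>i\<in>{1..k}. \<exists>b. \<forall>x. (\<lambda>g. (cmod (cinner x (\<pi> g (\<eta> i))))\<^sup>2) summable_on carrier G \<and>
      (\<Sum>\<^sub>\<infinity>g\<in>carrier G. (cmod (cinner x (\<pi> g (\<eta> i))))\<^sup>2) \<le> b * (norm x)\<^sup>2"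
    using assms(7) by (simp add: bessel_vector_def bessel_seq_def)
  then obtain bb where bb: "\<And>i x. i \<in> {1..k} \<Longrightarrow>
      (\<lambda>g. (cmod (cinner x (\<pi> g (\<eta> i))))\<^sup>2) summable_on carrier G \<and>
      (\<Sum>\<^sub>\<infinity>g\<in>carrier G. (cmod (cinner x (\<pi> g (\<eta> i))))\<^sup>2) \<le> bb i * (norm x)\<^sup>2"
    by metis
  define B where "B = 1 + (\<Sum>i\<in>{1..k}. \<bar>bb i\<bar>)"
  have Bpos: "B > 0" unfolding B_def by (simp add: sum_nonneg add_pos_nonneg)
  have bessel: "(\<lambda>j. (cmod (cinner x ((\<lambda>(g, i). \<pi> g (\<eta> i)) j)))\<^sup>2) summable_on I \<and> Se x \<le> B * (norm x)\<^sup>2"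
    for x
  proof -
    define f where "f = (\<lambda>j. (cmod (cinner x ((\<lambda>(g, i). \<pi> g (\<eta> i)) j)))\<^sup>2)"
    have ps: "f summable_on (carrier G \<times> {1..k}) \<and>
        infsum f (carrier G \<times> {1..k}) = (\<Sum>i\<in>{1..k}. infsum (\<lambda>g. f (g, i)) (carrier G))"
      by (rule prod_sum) (use bb in \<open>auto simp: f_def\<close>)
    have "(\<Sum>i\<in>{1..k}. infsum (\<lambda>g. f (g, i)) (carrier G)) \<le> (\<Sum>i\<in>{1..k}. bb i * (norm x)\<^sup>2)"
      by (rule sum_mono) (use bb in \<open>auto simp: f_def\<close>)
    also have "\<dots> \<le> (\<Sum>i\<in>{1..k}. \<bar>bb i\<bar> * (norm x)\<^sup>2)"
      by (rule sum_mono) (simp add: mult_right_mono)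
    also have "\<dots> \<le> B * (norm x)\<^sup>2"
      by (simp add: B_def sum_distrib_right[symmetric] distrib_right)
    finally show ?thesis using ps by (simp add: Se_def I_def f_def)
  qed

  obtain a b where a: "0 < a" and b: "0 < b" and fr: "\<And>x.
     (\<lambda>j. (cmod (cinner x ((\<lambda>(g, i). \<pi> g (\<xi> i)) j)))\<^sup>2) summable_on I \<and>
     a * (norm x)\<^sup>2 \<le> Sx x \<and> Sx x \<le> b * (norm x)\<^sup>2"
    using assms(5) unfolding frame_def Sx_def I_def by blast

  define c0 where "c0 = a / B"
  have c0: "c0 > 0" using a Bpos by (simp add: c0_def)
  have lowAd: "c0 * (norm x)\<^sup>2 \<le> (norm (Ad x))\<^sup>2" for x
  proof -
    have "a * (norm x)\<^sup>2 \<le> B * (norm (Ad x))\<^sup>2"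
      using fr[of x] bessel[of "Ad x"] key[of x] by linarith
    then show ?thesis using Bpos by (simp add: c0_def field_simps)
  qed

  have Abl: "bounded_linear A" by (rule bounded_clinear_bounded_linear[OF Abc])
  have Adbl: "bounded_linear Ad" by (rule bounded_clinear_bounded_linear[OF Adbc])
  define Ab where "Ab = mk A"
  define Adb where "Adb = mk Ad"
  define J :: "'h bop" where "J = mk (\<lambda>x. \<i> *\<^sub>C x)"
  define Pg where "Pg = (\<lambda>g. mk (\<pi> g))"
  have appAb[simp]: "app Ab = A" by (simp add: Ab_def app_mk Abl)
  have appAdb[simp]: "app Adb = Ad" by (simp add: Adb_def app_mk Adbl)
  have appJ[simp]: "app J x = \<i> *\<^sub>C x" for x by (simp add: J_def app_mk bl_J)
  have appPg[simp]: "g \<in> carrier G \<Longrightarrow> app (Pg g) = \<pi> g" for g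
    by (simp add: Pg_def app_mk bounded_clinear_bounded_linear pibc)

  define Pb where "Pb = Ab * Adb"
  define Kp where "Kp = norm Pb"
  define t where "t = c0 / (Kp\<^sup>2 + c0)"
  have t0: "t > 0" using c0 by (simp add: t_def add_nonneg_pos)
  have tK: "t * Kp\<^sup>2 \<le> c0"
  proof -
    have "t * Kp\<^sup>2 = c0 * (Kp\<^sup>2 / (Kp\<^sup>2 + c0))" by (simp add: t_def)
    also have "\<dots> \<le> c0 * 1"
      using c0 by (intro mult_left_mono) (simp_all add: add_nonneg_pos)
    finally show ?thesis by simp
  qed
  define Y where "Y = t *\<^sub>R Pb - 1"
  have appY: "app Y x = t *\<^sub>R A (Ad x) - x" for x by (simp add: Y_def Pb_def)

  define q where "q = sqrt (max 0 (1 - t * c0))"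
  have q1: "q < 1" using t0 c0 by (simp add: q_def)
  have q0: "q \<ge> 0" by (simp add: q_def)
  have normY: "norm Y < 1"
  proof -
    have "norm (app Y x) \<le> q * norm x" for x
    proof -
      have nP: "norm (A (Ad x)) \<le> Kp * norm x"
        using norm_app[of Pb x] by (simp add: Kp_def Pb_def)
      have reP: "Re (cinner (A (Ad x)) x) = (norm (Ad x))\<^sup>2"
        by (simp add: adj Re_cinner_self)
      have "(norm (app Y x))\<^sup>2 = (norm (t *\<^sub>R A (Ad x)))\<^sup>2 + (norm x)\<^sup>2 - 2 * Re (cinner (t *\<^sub>R A (Ad x)) x)"
        unfolding appY by (rule norm_diff_sq)
      also have "\<dots> = t\<^sup>2 * (norm (A (Ad x)))\<^sup>2 + (norm x)\<^sup>2 - 2 * t * (norm (Ad x))\<^sup>2"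
        using t0 reP by (simp add: cinner_scaleR_left power_mult_distrib)
      also have "\<dots> \<le> (1 - t * c0) * (norm x)\<^sup>2"
      proof -
        have h1: "(norm (A (Ad x)))\<^sup>2 \<le> (Kp * norm x)\<^sup>2"
          using nP by (simp add: power_mono)
        have h2: "t\<^sup>2 * (norm (A (Ad x)))\<^sup>2 \<le> t\<^sup>2 * (Kp * norm x)\<^sup>2"
          using h1 by (simp add: mult_left_mono)
        have h3: "t\<^sup>2 * (Kp * norm x)\<^sup>2 = t * (t * Kp\<^sup>2) * (norm x)\<^sup>2"
          by (simp add: power2_eq_square)
        have h4: "t * (t * Kp\<^sup>2) * (norm x)\<^sup>2 \<le> t * c0 * (norm x)\<^sup>2"
          using tK t0 by (simp add: mult_left_mono mult_right_mono)
        have h5: "t * c0 * (norm x)\<^sup>2 \<le> t * (norm (Ad x))\<^sup>2"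
          using lowAd[of x] t0 by (simp add: mult.assoc mult_left_mono)
        have h6: "(1 - t * c0) * (norm x)\<^sup>2 = (norm x)\<^sup>2 - t * c0 * (norm x)\<^sup>2"
          by (simp add: algebra_simps)
        have h7: "2 * t * (norm (Ad x))\<^sup>2 = 2 * (t * (norm (Ad x))\<^sup>2)" by simp
        show ?thesis unfolding h6 h7 using h2 h3 h4 h5 by linarith
      qed
      also have "\<dots> \<le> (q * norm x)\<^sup>2"
        by (simp add: q_def power_mult_distrib mult_right_mono)
      finally have "(norm (app Y x))\<^sup>2 \<le> (q * norm x)\<^sup>2" .
      then show ?thesis
        by (rule power2_le_imp_le) (simp add: q0)
    qed
    then have "norm Y \<le> q" by (intro norm_bop_bound q0)
    then show ?thesis using q1 by simp
  qed

  have pibl: "\<And>g. g \<in> carrier G \<Longrightarrow> bounded_linear (\<pi> g)"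
    using pibc by (simp add: bounded_clinear_bounded_linear)
  have sCR: "\<And>(r::real) (v::'h). \<i> *\<^sub>C (r *\<^sub>R v) = r *\<^sub>R (\<i> *\<^sub>C v)"
    by (simp add: scaleR_scaleC scaleC_scaleC mult.commute)
  have Ai: "\<And>v. A (\<i> *\<^sub>C v) = \<i> *\<^sub>C A v" using Abc by (simp add: bounded_clinear_scaleC)
  have Adi: "\<And>v. Ad (\<i> *\<^sub>C v) = \<i> *\<^sub>C Ad v" using Adbc by (simp add: bounded_clinear_scaleC)

  have JY: "J * Y = Y * J"
    by (rule bop_commI) (simp add: appY Ai Adi sCR scaleC_diff_right)
  have JAb: "J * Ab = Ab * J" by (rule bop_commI) (simp add: Ai)
  have JAdb: "J * Adb = Adb * J" by (rule bop_commI) (simp add: Adi)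
  have PgY: "Pg g * Y = Y * Pg g" if g: "g \<in> carrier G" for g
    by (rule bop_commI) (use pibl[OF g] g in \<open>simp add: appY Acomm Adcomm linear_simps\<close>)
  have PgAb: "Pg g * Ab = Ab * Pg g" if g: "g \<in> carrier G" for g
    by (rule bop_commI) (use g in \<open>simp add: Acomm\<close>)
  have PgAdb: "Pg g * Adb = Adb * Pg g" if g: "g \<in> carrier G" for g
    by (rule bop_commI) (use g in \<open>simp add: Adcomm\<close>)
  have saY: "selfadj Y"
    unfolding selfadj_def
  proof (intro allI)
    fix x y
    have "cinner (app Y x) y = of_real t * cinner (A (Ad x)) y - cinner x y"
      by (simp add: appY cinner_diff_left cinner_scaleR_left)
    also have "cinner (A (Ad x)) y = cinner (Ad x) (Ad y)" by (rule adj)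
    also have "cinner (Ad x) (Ad y) = cinner x (A (Ad y))" by (rule adj2)
    finally show "cinner (app Y x) y = cinner x (app Y y)"
      by (simp add: appY cinner_diff_right cinner_scaleR_right)
  qed

  define Sp where "Sp = phi Y (- 1/2)"
  define R where "R = phi Y (- 1)"
  have JSp: "J * Sp = Sp * J" unfolding Sp_def by (rule phi_commute[OF normY JY])
  have JR: "J * R = R * J" unfolding R_def by (rule phi_commute[OF normY JY])
  have PgSp: "Pg g * Sp = Sp * Pg g" if "g \<in> carrier G" for g
    unfolding Sp_def by (rule phi_commute[OF normY PgY[OF that]])
  have saSp: "selfadj Sp" unfolding Sp_def by (rule phi_selfadj[OF normY saY])
  have tP: "t *\<^sub>R Pb = phi Y 1" by (simp add: phi_1 Y_def)
  have SpSp: "Sp * Sp = R" by (simp add: Sp_def R_def phi_mult[OF normY])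
  have SpPSp: "Sp * (t *\<^sub>R Pb) * Sp = 1"
    by (simp add: tP Sp_def phi_mult[OF normY] phi_0)
  have PR: "(t *\<^sub>R Pb) * R = 1"
    by (simp add: tP R_def phi_mult[OF normY] phi_0)
  have tt: "sqrt t * sqrt t = t" using t0 by simp

  define V where "V = sqrt t *\<^sub>R (Adb * Sp)"
  define V' where "V' = sqrt t *\<^sub>R (Sp * Ab)"
  have appV: "app V x = sqrt t *\<^sub>R Ad (app Sp x)" for x by (simp add: V_def)
  have appV': "app V' x = sqrt t *\<^sub>R app Sp (A x)" for x by (simp add: V'_def)
  have JV: "J * V = V * J"
    unfolding V_def by (intro bop_comm_scaleR bop_comm_mult JAdb JSp)
  have PgV: "Pg g * V = V * Pg g" if "g \<in> carrier G" for g
    unfolding V_def by (intro bop_comm_scaleR bop_comm_mult PgAdb PgSp that)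
  have bclV: "bounded_clinear (app V)"
  proof (rule bounded_clinearI_J[OF app_bounded_linear])
    fix x
    have "app (V * J) x = app (J * V) x" by (simp only: JV)
    then show "app V (\<i> *\<^sub>C x) = \<i> *\<^sub>C app V x" by simp
  qed
  have VM: "app V \<in> M"
    unfolding M_def commutant_def
  proof (intro CollectI conjI ballI bclV)
    fix s assume "s \<in> \<pi> ` carrier G"
    then obtain g where g: "g \<in> carrier G" and s: "s = \<pi> g" by blast
    show "app V \<circ> s = s \<circ> app V"
    proof
      fix x
      have "app (V * Pg g) x = app (Pg g * V) x" by (simp only: PgV[OF g])
      then show "(app V \<circ> s) x = (s \<circ> app V) x" using g by (simp add: s)
    qed
  qed
  have adjV: "cadjoint (app V) = app V'"
  proof (rule cadjoint_unique[OF bclV])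
    fix x y
    have "cinner (app V x) y = of_real (sqrt t) * cinner (Ad (app Sp x)) y"
      by (simp add: appV cinner_scaleR_left)
    also have "cinner (Ad (app Sp x)) y = cinner (app Sp x) (A y)" by (rule adj2)
    also have "\<dots> = cinner x (app Sp (A y))" using saSp by (simp add: selfadj_def)
    finally show "cinner (app V x) y = cinner x (app V' y)"
      by (simp add: appV' cinner_scaleR_right)
  qed
  have V'V: "V' * V = 1"
  proof -
    have "V' * V = (sqrt t * sqrt t) *\<^sub>R (Sp * (Ab * Adb) * Sp)"
      by (simp add: V_def V'_def mult.assoc)
    also have "\<dots> = Sp * (t *\<^sub>R Pb) * Sp" using t0 by (simp add: Pb_def)
    finally show ?thesis using SpPSp by simp
  qed
  have "cadjoint (app V) \<circ> app V = id"
  proof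
    fix x
    have "app V' (app V x) = app (V' * V) x" by simp
    then show "(cadjoint (app V) \<circ> app V) x = id x" by (simp add: adjV V'V)
  qed
  from fin[OF VM this] have VV'f: "app V \<circ> app V' = id" by (simp add: adjV)
  have VV': "V * V' = 1"
  proof (rule app_bop_eqI)
    fix x
    have "app V (app V' x) = x" using VV'f by (simp add: fun_eq_iff)
    then show "app (V * V') x = app 1 x" by simp
  qed
  have VV'2: "V * V' = t *\<^sub>R (Adb * R * Ab)"
  proof -
    have "V * V' = (sqrt t * sqrt t) *\<^sub>R (Adb * (Sp * Sp) * Ab)"
      by (simp add: V_def V'_def mult.assoc)
    then show ?thesis using t0 by (simp add: SpSp)
  qed

  define Binv where "Binv = t *\<^sub>R (Adb * R)"
  have BA: "Binv * Ab = 1" using VV' VV'2 by (simp add: Binv_def mult.assoc)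
  have AB: "Ab * Binv = 1"
  proof -
    have "Ab * Binv = (t *\<^sub>R Pb) * R" by (simp add: Binv_def Pb_def mult.assoc)
    then show ?thesis using PR by simp
  qed
  have JB: "J * Binv = Binv * J"
    unfolding Binv_def by (intro bop_comm_scaleR bop_comm_mult JAdb JR)
  have bclB: "bounded_clinear (app Binv)"
  proof (rule bounded_clinearI_J[OF app_bounded_linear])
    fix x
    have "app (Binv * J) x = app (J * Binv) x" by (simp only: JB)
    then show "app Binv (\<i> *\<^sub>C x) = \<i> *\<^sub>C app Binv x" by simp
  qed
  have inv: "invertible_op A"
    unfolding invertible_op_def
  proof (intro exI conjI)
    show "bounded_clinear (app Binv)" by (rule bclB)
    show "A \<circ> app Binv = id"
    proof
      fix x
      have "app (Ab * Binv) x = x" by (simp add: AB)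
      then show "(A \<circ> app Binv) x = id x" by simp
    qed
    show "app Binv \<circ> A = id"
    proof
      fix x
      have "app (Binv * Ab) x = x" by (simp add: BA)
      then show "(app Binv \<circ> A) x = id x" by simp
    qed
  qed

  define Cinv where "Cinv = t *\<^sub>R (R * Ab)"
  have AdC: "Ad (app Cinv y) = y" for y
  proof -
    have "Adb * Cinv = 1" using VV' VV'2 by (simp add: Cinv_def mult.assoc)
    then have "app (Adb * Cinv) y = y" by simp
    then show ?thesis by simp
  qed
  define Ka where "Ka = norm Adb + 1"
  have Ka: "Ka > 0" by (simp add: Ka_def add_nonneg_pos)
  have fr2: "frame I (\<lambda>(g, i). \<pi> g (\<eta> i))"
    unfolding frame_def
  proof (intro exI conjI allI)
    show "0 < a / Ka\<^sup>2" using a Ka by simp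
    show "0 < B" by (rule Bpos)
    fix x
    show "(\<lambda>j. (cmod (cinner x ((\<lambda>(g, i). \<pi> g (\<eta> i)) j)))\<^sup>2) summable_on I"
      using bessel[of x] by blast
    show "(\<Sum>\<^sub>\<infinity>j\<in>I. (cmod (cinner x ((\<lambda>(g, i). \<pi> g (\<eta> i)) j)))\<^sup>2) \<le> B * (norm x)\<^sup>2"
      using bessel[of x] by (simp add: Se_def)
    show "a / Ka\<^sup>2 * (norm x)\<^sup>2 \<le> (\<Sum>\<^sub>\<infinity>j\<in>I. (cmod (cinner x ((\<lambda>(g, i). \<pi> g (\<eta> i)) j)))\<^sup>2)"
    proof -
      define y where "y = app Cinv x"
      have xy: "x = Ad y" by (simp add: y_def AdC)
      have "norm x \<le> Ka * norm y"
      proof -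
        have "norm x = norm (app Adb y)" by (simp add: xy)
        also have "\<dots> \<le> norm Adb * norm y" by (rule norm_app)
        also have "\<dots> \<le> Ka * norm y" by (simp add: Ka_def mult_right_mono)
        finally show ?thesis .
      qed
      then have "(norm x)\<^sup>2 \<le> (Ka * norm y)\<^sup>2" by (simp add: power_mono)
      then have "(norm x)\<^sup>2 / Ka\<^sup>2 \<le> (norm y)\<^sup>2" using Ka by (simp add: divide_le_eq power_mult_distrib mult.commute)
      then have h: "a * ((norm x)\<^sup>2 / Ka\<^sup>2) \<le> a * (norm y)\<^sup>2" using a by (intro mult_left_mono) simp_all
      have "a / Ka\<^sup>2 * (norm x)\<^sup>2 = a * ((norm x)\<^sup>2 / Ka\<^sup>2)" by simp
      also have "\<dots> \<le> a * (norm y)\<^sup>2" by (rule h)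
      also have "\<dots> \<le> Sx y" using fr[of y] by simp
      also have "\<dots> = Se x" by (simp add: key xy)
      finally show ?thesis by (simp add: Se_def)
    qed
  qed
  show ?thesis using inv fr2 by (simp add: I_def)
qed

end
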